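(* In the isotropic setting below, fix $r>0$, $F\in\mathrm{GL}^+(3)$, $C_p\in\mathrm{PSym}(3)$, and let $U_p=\sqrt{C_p}$, $\varphi:=\sqrt{\mathrm{tr}[(\mathrm{dev}_3\widetilde\Sigma)^2]}$ (well defined, since $\mathrm{tr}[(\mathrm{dev}_3\widetilde\Sigma)^2]\ge0$). Define the Helm admissible set $\mathcal H_r:=\{0\}$ if $\varphi<r$, $\mathcal H_r:=\{-\lambda\,C_p^{-1}\mathrm{dev}_3\widetilde\Sigma/\varphi:\lambda\ge0\}$ if $\varphi=r$, $\mathcal H_r:=\emptyset$ if $\varphi>r$. Then $$\mathcal H_r=-U_p^{-1}\,\mathcal N_r(\mathring\Sigma)\,U_p^{-1}.$$ Equivalently, with $Z=\frac{d}{dt}[C_p^{-1}]$ and $\frac{d}{dt}[C_p]=-C_pZC_p$, the Helm flow rule $\frac{d}{dt}[C_p]=\lambda\,\frac{\mathrm{dev}_3\widetilde\Sigma}{\varphi}\,C_p$ (with $\lambda\ge0$, $\varphi\le r$, $\lambda(\varphi-r)=0$) holds if and only if the Grandi–Stefanelli flow rule $\sqrt{C_p}\,\frac{d}{dt}[C_p^{-1}]\sqrt{C_p}\in-\mathcal N_r(\mathring\Sigma)$ holds; hence in the isotropic case it is also equivalent to the Lion flow rule.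
   Context: $W$ objective and isotropic, written $W(F_e)=\Psi(I_1(C_e),I_2(C_e),I_3(C_e))$ with $\Psi\in C^1$; $\widetilde W(X)=\Psi(\mathrm{tr}X,\mathrm{tr}(\mathrm{Cof}X),\det X)$. $C=F^TF$. $\langle X,Y\rangle=\mathrm{tr}(XY^T)$, $\|\cdot\|$ Frobenius norm, $D$ gradient, $\mathrm{dev}_3X=X-\frac13\mathrm{tr}(X)\mathbb{1}$, $\mathrm{sym}X=\frac12(X+X^T)$. $\widetilde\Sigma:=2\,C\,D\widetilde W(CC_p^{-1})\,C_p^{-1}$ (not symmetric in general). $\mathring\Sigma:=2\,U_p^{-1}\mathrm{sym}[C\,D\widetilde W(CC_p^{-1})]U_p^{-1}$. For symmetric $S$: $\mathcal N_r(S)=\{0\}$ if $\|\mathrm{dev}_3S\|<r$, $\{\lambda\,\mathrm{dev}_3S/\|\mathrm{dev}_3S\|:\lambda\ge0\}$ if $\|\mathrm{dev}_3S\|=r$, $\emptyset$ if $\|\mathrm{dev}_3S\|>r$. $M\mathcal AN=\{MXN:X\in\mathcal A\}$. The Lion flow rule is $\frac{d}{dt}[C_p^{-1}]\in-F_p^{-1}\mathcal N_r(\Sigma_e)F_p^{-T}$ with $\Sigma_e=F_e^TDW(F_e)$, $F_e=FF_p^{-1}$, $C_p=F_p^TF_p$. *)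

theory Defs
  imports "HOL-Analysis.Analysis"
begin

type_synonym mat3 = "real^3^3"

definition PSym3 :: "mat3 set" where
  "PSym3 = {C. transpose C = C \<and> (\<forall>x::real^3. x \<noteq> 0 \<longrightarrow> x \<bullet> (C *v x) > 0)}"

definition GLplus3 :: "mat3 set" where
  "GLplus3 = {F. det F > 0}"

definition msqrt :: "mat3 \<Rightarrow> mat3" where
  "msqrt C = (THE U. U \<in> PSym3 \<and> U ** U = C)"

text \<open>Cofactor matrix of a 3x3 matrix (indices in type 3 are taken mod 3).\<close>
definition Cof :: "mat3 \<Rightarrow> mat3" where
  "Cof X = (\<chi> i j. X$(i+1)$(j+1) * X$(i+2)$(j+2) - X$(i+1)$(j+2) * X$(i+2)$(j+1))"

definition dev3 :: "mat3 \<Rightarrow> mat3" where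
  "dev3 X = X - (trace X / 3) *\<^sub>R mat 1"

definition msym :: "mat3 \<Rightarrow> mat3" where
  "msym X = (1/2) *\<^sub>R (X + transpose X)"

text \<open>Gradient w.r.t. the Frobenius inner product; on real^3^3 the inner product
  is the sum of entrywise products, i.e. tr(X Y^T).\<close>
definition Dgrad :: "(mat3 \<Rightarrow> real) \<Rightarrow> mat3 \<Rightarrow> mat3" where
  "Dgrad f X = (THE G. (f has_derivative (\<lambda>H. G \<bullet> H)) (at X))"

definition Wtilde :: "(real^3 \<Rightarrow> real) \<Rightarrow> mat3 \<Rightarrow> real" where
  "Wtilde \<Psi> X = \<Psi> (vector [trace X, trace (Cof X), det X])"

definition C1_on :: "(real^3) set \<Rightarrow> (real^3 \<Rightarrow> real) \<Rightarrow> bool" where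
  "C1_on S \<Psi> \<longleftrightarrow> (\<exists>g. continuous_on S g \<and> (\<forall>x\<in>S. (\<Psi> has_derivative (\<lambda>h. g x \<bullet> h)) (at x)))"

definition SigmaT :: "(real^3 \<Rightarrow> real) \<Rightarrow> mat3 \<Rightarrow> mat3 \<Rightarrow> mat3" where
  "SigmaT \<Psi> C Cp = 2 *\<^sub>R (C ** Dgrad (Wtilde \<Psi>) (C ** matrix_inv Cp) ** matrix_inv Cp)"

definition SigmaR :: "(real^3 \<Rightarrow> real) \<Rightarrow> mat3 \<Rightarrow> mat3 \<Rightarrow> mat3" where
  "SigmaR \<Psi> C Cp = 2 *\<^sub>R (matrix_inv (msqrt Cp) ** msym (C ** Dgrad (Wtilde \<Psi>) (C ** matrix_inv Cp))
                       ** matrix_inv (msqrt Cp))"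

definition Ncone :: "real \<Rightarrow> mat3 \<Rightarrow> mat3 set" where
  "Ncone r S =
     (if norm (dev3 S) < r then {0}
      else if norm (dev3 S) = r then {l *\<^sub>R (dev3 S /\<^sub>R norm (dev3 S)) | l. l \<ge> 0}
      else {})"

definition phiH :: "(real^3 \<Rightarrow> real) \<Rightarrow> mat3 \<Rightarrow> mat3 \<Rightarrow> real" where
  "phiH \<Psi> C Cp = sqrt (trace (dev3 (SigmaT \<Psi> C Cp) ** dev3 (SigmaT \<Psi> C Cp)))"

definition Helm :: "real \<Rightarrow> (real^3 \<Rightarrow> real) \<Rightarrow> mat3 \<Rightarrow> mat3 \<Rightarrow> mat3 set" where
  "Helm r \<Psi> C Cp =
     (let \<phi> = phiH \<Psi> C Cp in
      if \<phi> < r then {0}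
      else if \<phi> = r then
        {- (l *\<^sub>R (matrix_inv Cp ** dev3 (SigmaT \<Psi> C Cp) /\<^sub>R \<phi>)) | l. l \<ge> 0}
      else {})"

end

theory Submission
  imports Defs
begin


lemma three_num: "(4::3) = 1" "(5::3) = 2" "(6::3) = 3"
  by simp_all

lemma cof_adj: "transpose X ** Cof X = det X *\<^sub>R (mat 1 :: mat3)"
  unfolding Cof_def det_3
  by (simp add: vec_eq_iff forall_3 matrix_matrix_mult_def transpose_def sum_3 mat_def three_num algebra_simps)

lemma nth2_deriv[derivative_intros]: "((\<lambda>X::mat3. X$i$j) has_derivative (\<lambda>H. H$i$j)) F"
proof -
  have "bounded_linear (\<lambda>X::mat3. X$i$j)"
    by (rule bounded_linear_compose[of "\<lambda>x::real^3. x$j" "\<lambda>x::mat3. x$i"]) auto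
  then show ?thesis by (rule bounded_linear_imp_has_derivative)
qed

lemma inner_mat3: "(A::mat3) \<bullet> B = (\<Sum>i\<in>UNIV. \<Sum>j\<in>UNIV. A$i$j * B$i$j)"
  by (simp add: inner_vec_def)

lemma deriv_tr: "((\<lambda>X::mat3. trace X) has_derivative (\<lambda>H. trace H)) (at X)"
  unfolding trace_def sum_3
  by (auto intro!: derivative_eq_intros)

lemma deriv_trcof: "((\<lambda>X::mat3. trace (Cof X)) has_derivative (\<lambda>H. (trace X *\<^sub>R mat 1 - transpose X) \<bullet> H)) (at X)"
  unfolding trace_def sum_3 Cof_def inner_mat3
  by (auto intro!: derivative_eq_intros simp: three_num mat_def transpose_def sum_3 algebra_simps)

lemma deriv_det: "((\<lambda>X::mat3. det X) has_derivative (\<lambda>H. Cof X \<bullet> H)) (at X)"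
  unfolding det_3 Cof_def inner_mat3
  by (auto intro!: derivative_eq_intros simp: three_num sum_3 algebra_simps)

lemma vec3_eq: "vector [a,b,c] = a *\<^sub>R axis 1 1 + b *\<^sub>R axis 2 1 + c *\<^sub>R (axis 3 1 :: real^3)"
  by (simp add: vec_eq_iff forall_3 vector_3 axis_def)

lemma deriv_phi: "((\<lambda>X::mat3. vector [trace X, trace (Cof X), det X] :: real^3) has_derivative
   (\<lambda>H. vector [trace H, (trace X *\<^sub>R mat 1 - transpose X) \<bullet> H, Cof X \<bullet> H])) (at X)"
  unfolding vec3_eq
  by (intro derivative_eq_intros; (rule deriv_tr deriv_trcof deriv_det)?) auto

lemma trace_inner: "trace (H::mat3) = mat 1 \<bullet> H"
  by (simp add: inner_mat3 trace_def mat_def sum_3)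

lemma Dgrad_eq:
  assumes C1: "C1_on {x. \<forall>i. 0 < x$i} \<Psi>" and pos: "trace X > 0" "trace (Cof X) > 0" "det X > 0"
  shows "\<exists>a b c. Dgrad (Wtilde \<Psi>) X = a *\<^sub>R mat 1 + b *\<^sub>R (trace X *\<^sub>R mat 1 - transpose X) + c *\<^sub>R Cof X"
proof -
  define p :: "real^3" where "p = vector [trace X, trace (Cof X), det X]"
  obtain g where g: "\<forall>x\<in>{x. \<forall>i. 0 < x$i}. (\<Psi> has_derivative (\<lambda>h. g x \<bullet> h)) (at x)"
    using C1 unfolding C1_on_def by blast
  have "p \<in> {x. \<forall>i. 0 < x$i}" using pos by (simp add: p_def forall_3 vector_3)
  with g have dP: "(\<Psi> has_derivative (\<lambda>h. g p \<bullet> h)) (at p)" by blast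
  define G0 where "G0 = (g p $ 1) *\<^sub>R mat 1 + (g p $ 2) *\<^sub>R (trace X *\<^sub>R mat 1 - transpose X) + (g p $ 3) *\<^sub>R Cof X"
  have "((\<Psi> \<circ> (\<lambda>X::mat3. vector [trace X, trace (Cof X), det X] :: real^3)) has_derivative
      ((\<lambda>h. g p \<bullet> h) \<circ> (\<lambda>H. vector [trace H, (trace X *\<^sub>R mat 1 - transpose X) \<bullet> H, Cof X \<bullet> H]))) (at X)"
    by (rule diff_chain_at[OF deriv_phi]) (use dP p_def in simp)
  moreover have "(\<Psi> \<circ> (\<lambda>X::mat3. vector [trace X, trace (Cof X), det X] :: real^3)) = Wtilde \<Psi>"
    by (simp add: fun_eq_iff Wtilde_def)
  moreover have "((\<lambda>h. g p \<bullet> h) \<circ> (\<lambda>H. vector [trace H, (trace X *\<^sub>R mat 1 - transpose X) \<bullet> H, Cof X \<bullet> H])) = (\<lambda>H. G0 \<bullet> H)"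
    by (simp add: fun_eq_iff G0_def inner_vec_def sum_3 vector_3 trace_inner inner_add_left algebra_simps)
  ultimately have D: "(Wtilde \<Psi> has_derivative (\<lambda>H. G0 \<bullet> H)) (at X)" by simp
  have "Dgrad (Wtilde \<Psi>) X = G0"
    unfolding Dgrad_def
  proof (rule the_equality)
    show "(Wtilde \<Psi> has_derivative (\<lambda>H. G0 \<bullet> H)) (at X)" by (rule D)
  next
    fix G assume "(Wtilde \<Psi> has_derivative (\<lambda>H. G \<bullet> H)) (at X)"
    from has_derivative_unique[OF this D] have "\<And>H. G \<bullet> H = G0 \<bullet> H" by metis
    from this[of "G - G0"] have "(G - G0) \<bullet> (G - G0) = 0" by (simp add: inner_diff_left inner_commute)
    then show "G = G0" by simp
  qed
  then show ?thesis unfolding G0_def by blast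
qed


definition PD :: "real^'n^'n \<Rightarrow> bool" where
  "PD M \<longleftrightarrow> (\<forall>x. x \<noteq> 0 \<longrightarrow> x \<bullet> (M *v x) > 0)"

lemma PSym3_iff: "C \<in> PSym3 \<longleftrightarrow> transpose C = C \<and> PD C"
  by (simp add: PSym3_def PD_def)

lemma inv_LR:
  fixes A :: "real^'n^'n"
  assumes "invertible A"
  shows "A ** matrix_inv A = mat 1" "matrix_inv A ** A = mat 1"
proof -
  have "\<exists>A'. A ** A' = mat 1 \<and> A' ** A = mat 1" using assms unfolding invertible_def by blast
  from someI_ex[OF this] show "A ** matrix_inv A = mat 1" "matrix_inv A ** A = mat 1"
    unfolding matrix_inv_def by auto
qed

lemma inv_eq:
  fixes A B :: "real^'n^'n"
  assumes "A ** B = mat 1"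
  shows "matrix_inv A = B"
proof -
  have inv: "invertible A" using assms invertible_right_inverse by blast
  have "matrix_inv A = matrix_inv A ** (A ** B)" using assms by simp
  also have "\<dots> = B" using inv_LR(2)[OF inv] by (simp add: matrix_mul_assoc)
  finally show ?thesis .
qed

lemma inner_mv: "x \<bullet> ((M::real^'n^'n) *v y) = (transpose M *v x) \<bullet> y"
  by (metis dot_lmul_matrix transpose_transpose vector_transpose_matrix)

lemma inner_mv_sym: "transpose M = M \<Longrightarrow> x \<bullet> ((M::real^'n^'n) *v y) = (M *v x) \<bullet> y"
  by (metis inner_mv)

lemma PD_invertible: "PD (M::real^'n^'n) \<Longrightarrow> invertible M"
  unfolding PD_def invertible_left_inverse matrix_left_invertible_ker
  by (metis inner_zero_right less_irrefl)

lemma inv_transpose: "invertible (A::real^'n^'n) \<Longrightarrow> matrix_inv (transpose A) = transpose (matrix_inv A)"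
  by (rule inv_eq) (metis inv_LR(2) matrix_transpose_mul transpose_mat)

lemma inv_sym: "invertible (A::real^'n^'n) \<Longrightarrow> transpose A = A \<Longrightarrow> transpose (matrix_inv A) = matrix_inv A"
  by (metis inv_transpose)

lemma inv_mult:
  fixes A B :: "real^'n^'n"
  assumes "invertible A" "invertible B"
  shows "matrix_inv (A ** B) = matrix_inv B ** matrix_inv A"
proof (rule inv_eq)
  have "A ** B ** (matrix_inv B ** matrix_inv A) = A ** (B ** matrix_inv B) ** matrix_inv A"
    by (simp add: matrix_mul_assoc)
  then show "A ** B ** (matrix_inv B ** matrix_inv A) = mat 1" using inv_LR[OF assms(1)] inv_LR[OF assms(2)] by simp
qed

lemma inv_inv: "invertible (A::real^'n^'n) \<Longrightarrow> matrix_inv (matrix_inv A) = A"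
  by (rule inv_eq) (rule inv_LR(2))

lemma inv_invertible: "invertible (A::real^'n^'n) \<Longrightarrow> invertible (matrix_inv A)"
  by (meson inv_LR invertible_def)

lemma invertible_nz: "invertible (A::real^'n^'n) \<Longrightarrow> x \<noteq> 0 \<Longrightarrow> A *v x \<noteq> 0"
  by (metis inv_LR(2) matrix_vector_mul_assoc matrix_vector_mul_lid matrix_vector_mult_0_right)

lemma PD_congr:
  assumes "PD (M::real^'n^'n)" "invertible (P::real^'n^'n)"
  shows "PD (transpose P ** M ** P)"
  unfolding PD_def
proof (intro allI impI)
  fix x :: "real^'n" assume "x \<noteq> 0"
  then have "P *v x \<noteq> 0" using invertible_nz assms(2) by blast
  then have "(P *v x) \<bullet> (M *v (P *v x)) > 0" using assms(1) unfolding PD_def by blast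
  moreover have "(transpose P ** M ** P) *v x = transpose P *v (M *v (P *v x))"
    by (simp add: matrix_vector_mul_assoc matrix_mul_assoc)
  moreover have "x \<bullet> (transpose P *v (M *v (P *v x))) = (P *v x) \<bullet> (M *v (P *v x))"
    by (simp only: inner_mv transpose_transpose)
  ultimately show "x \<bullet> ((transpose P ** M ** P) *v x) > 0" by simp
qed

lemma PD_inv: assumes "PD (M::real^'n^'n)" "transpose M = M" shows "PD (matrix_inv M)"
  unfolding PD_def
proof (intro allI impI)
  fix x :: "real^'n" assume x: "x \<noteq> 0"
  have inv: "invertible M" using PD_invertible assms by blast
  define y where "y = matrix_inv M *v x"
  have xy: "x = M *v y" using inv_LR(1)[OF inv] by (simp add: y_def matrix_vector_mul_assoc)
  have "y \<noteq> 0" using x xy by auto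
  then have "y \<bullet> (M *v y) > 0" using assms unfolding PD_def by blast
  then show "x \<bullet> (matrix_inv M *v x) > 0"
    by (metis xy y_def inner_commute)
qed

lemma trace_PD: assumes "PD (M::mat3)" shows "trace M > 0"
proof -
  have "\<And>i. M$i$i > 0"
  proof -
    fix i :: 3
    have "axis i 1 \<noteq> (0::real^3)" by (simp add: axis_eq_0_iff)
    then have "axis i 1 \<bullet> (M *v axis i 1) > 0" using assms unfolding PD_def by blast
    then show "M$i$i > 0" by (simp only: inner_axis' matrix_vector_mult_basis) (simp add: column_def)
  qed
  then show ?thesis unfolding trace_def by (simp add: sum_3 add_pos_pos)
qed


lemma quad_zero:
  fixes b c :: real
  assumes "\<And>t. 2 * b * t + c * t^2 \<le> 0"
  shows "b = 0"
proof (rule ccontr)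
  assume b: "b \<noteq> 0"
  define e where "e = 1 / (\<bar>c\<bar> + 1)"
  have d: "\<bar>c\<bar> + 1 > 0" by simp
  have e: "e > 0" unfolding e_def using d by simp
  have "\<bar>c\<bar> * e = \<bar>c\<bar> / (\<bar>c\<bar> + 1)" by (simp add: e_def)
  also have "\<dots> < 1" using d by (simp add: divide_less_eq)
  finally have "\<bar>c * e\<bar> < 1" using e by (simp add: abs_mult)
  then have ce: "1 + c * e > 0" by (simp add: abs_less_iff)
  have "2 * b * (b*e) + c * (b*e)^2 = b^2 * e * (1 + (1 + c*e))" by (simp add: power2_eq_square algebra_simps)
  moreover have "b^2 * e * (1 + (1 + c*e)) > 0" using b e ce by simp
  ultimately show False using assms[of "b*e"] by linarith
qed


lemma arith_aux:
  fixes M t a b c d :: real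
  shows "M + t*a + t*a + t^2*c \<le> M*(1 + 2*t*b + t^2*d) \<Longrightarrow> 2*(a - M*b)*t + (c - M*d)*t^2 \<le> 0"
  by (simp add: algebra_simps)

lemma eig_step:
  fixes A :: "real^'n^'n" and B :: "(real^'n) set"
  assumes sym: "transpose A = A"
    and eigB: "\<forall>u\<in>B. \<exists>\<mu>. A *v u = \<mu> *\<^sub>R u"
    and ne: "\<exists>x. norm x = 1 \<and> (\<forall>u\<in>B. u \<bullet> x = 0)"
  shows "\<exists>v \<mu>. norm v = 1 \<and> (\<forall>u\<in>B. u \<bullet> v = 0) \<and> A *v v = \<mu> *\<^sub>R v"
proof -
  define K where "K = sphere (0::real^'n) 1 \<inter> (\<Inter>u\<in>B. {x. u \<bullet> x = 0})"
  have "compact K" unfolding K_def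
    by (intro compact_Int_closed compact_sphere closed_INT ballI closed_hyperplane)
  moreover have "K \<noteq> {}" using ne unfolding K_def by auto
  moreover have "continuous_on K (\<lambda>x. x \<bullet> (A *v x))"
    by (intro continuous_on_inner continuous_on_id matrix_vector_mult_linear_continuous_on)
  ultimately have "\<exists>v\<in>K. \<forall>y\<in>K. y \<bullet> (A *v y) \<le> v \<bullet> (A *v v)"
    by (rule continuous_attains_sup)
  then obtain v where vK: "v \<in> K" and vmax: "\<And>y. y \<in> K \<Longrightarrow> y \<bullet> (A *v y) \<le> v \<bullet> (A *v v)"
    by blast
  define M where "M = v \<bullet> (A *v v)"
  have nv: "norm v = 1" and vB: "\<forall>u\<in>B. u \<bullet> v = 0" using vK by (auto simp: K_def)
  have vv: "v \<bullet> v = 1" using nv by (simp add: norm_eq_1)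
  have bound: "x \<bullet> (A *v x) \<le> M * (x \<bullet> x)" if xB: "\<forall>u\<in>B. u \<bullet> x = 0" for x
  proof (cases "x = 0")
    case True then show ?thesis by simp
  next
    case False
    define y where "y = x /\<^sub>R norm x"
    have "y \<in> K" using False xB by (simp add: K_def y_def inner_scaleR_right)
    then have yM: "y \<bullet> (A *v y) \<le> M" using vmax M_def by blast
    have xy: "norm x *\<^sub>R y = x" using False by (simp add: y_def)
    have "(norm x *\<^sub>R y) \<bullet> (A *v (norm x *\<^sub>R y)) = (norm x)^2 * (y \<bullet> (A *v y))"
      by (simp add: matrix_vector_mult_scaleR power2_eq_square)
    then have "x \<bullet> (A *v x) = (norm x)^2 * (y \<bullet> (A *v y))" unfolding xy .
    also have "\<dots> \<le> (norm x)^2 * M" using yM by (simp add: mult_left_mono)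
    finally show ?thesis by (simp add: power2_norm_eq_inner mult.commute)
  qed
  define z where "z = A *v v - M *\<^sub>R v"
  have perp: "w \<bullet> z = 0" if wB: "\<forall>u\<in>B. u \<bullet> w = 0" for w
  proof -
    have "w \<bullet> (A *v v) - M * (w \<bullet> v) = 0"
    proof (rule quad_zero[where c = "w \<bullet> (A *v w) - M * (w \<bullet> w)"])
      fix t :: real
      have "\<forall>u\<in>B. u \<bullet> (v + t *\<^sub>R w) = 0" using vB wB by (simp add: inner_add_right)
      then have bd: "(v + t *\<^sub>R w) \<bullet> (A *v (v + t *\<^sub>R w)) \<le> M * ((v + t *\<^sub>R w) \<bullet> (v + t *\<^sub>R w))"
        by (rule bound)
      have sy: "v \<bullet> (A *v w) = w \<bullet> (A *v v)" using inner_mv_sym[OF sym, of v w] by (simp add: inner_commute)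
      have e1: "(v + t *\<^sub>R w) \<bullet> (A *v (v + t *\<^sub>R w)) = v \<bullet> (A *v v) + t*(v \<bullet> (A *v w)) + t*(w \<bullet> (A *v v)) + t^2*(w \<bullet> (A *v w))"
        by (simp add: matrix_vector_right_distrib matrix_vector_mult_scaleR inner_add_left inner_add_right power2_eq_square ring_distribs)
      have e2: "(v + t *\<^sub>R w) \<bullet> (v + t *\<^sub>R w) = v \<bullet> v + 2*t*(w \<bullet> v) + t^2*(w \<bullet> w)"
        by (simp add: inner_add_left inner_add_right inner_commute[of v w] power2_eq_square ring_distribs)
      have "v \<bullet> (A *v v) + t*(w \<bullet> (A *v v)) + t*(w \<bullet> (A *v v)) + t^2*(w \<bullet> (A *v w)) \<le> M * (1 + 2*t*(w \<bullet> v) + t^2*(w \<bullet> w))"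
        using bd unfolding e1 e2 sy vv .
      then show "2*(w \<bullet> (A *v v) - M * (w \<bullet> v)) * t + (w \<bullet> (A *v w) - M * (w \<bullet> w)) * t^2 \<le> 0"
        unfolding M_def[symmetric] by (rule arith_aux)
    qed
    then show ?thesis by (simp add: z_def inner_diff_right)
  qed
  have zB: "\<forall>u\<in>B. u \<bullet> z = 0"
  proof
    fix u assume u: "u \<in> B"
    then obtain \<mu> where Au: "A *v u = \<mu> *\<^sub>R u" using eigB by blast
    have "u \<bullet> (A *v v) = (A *v u) \<bullet> v" using inner_mv_sym[OF sym] .
    then have "u \<bullet> (A *v v) = \<mu> * (u \<bullet> v)" by (simp add: Au)
    then show "u \<bullet> z = 0" using vB u by (simp add: z_def inner_diff_right)
  qed
  have "z \<bullet> z = 0" using perp[OF zB] .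
  then have "A *v v = M *\<^sub>R v" by (simp add: z_def)
  then show ?thesis using nv vB by blast
qed


lemma unit_perp:
  fixes S :: "(real^3) set"
  assumes "finite S" "card S < 3"
  shows "\<exists>x. norm x = 1 \<and> (\<forall>u\<in>S. u \<bullet> x = 0)"
proof -
  have "dim S \<le> card S" using dim_le_card[OF span_superset assms(1)] .
  then have "dim S < DIM(real^3)" using assms(2) by simp
  then obtain x :: "real^3" where x: "x \<noteq> 0" "\<And>y. y \<in> span S \<Longrightarrow> orthogonal x y"
    using orthogonal_to_subspace_exists by blast
  have "\<forall>u\<in>S. u \<bullet> (x /\<^sub>R norm x) = 0"
    using x(2)[OF span_base] by (simp add: orthogonal_def inner_commute)
  moreover have "norm (x /\<^sub>R norm x) = 1" using x(1) by simp
  ultimately show ?thesis by blast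
qed

lemma spectral3:
  fixes A :: mat3
  assumes sym: "transpose A = A"
  shows "\<exists>v::3\<Rightarrow>real^3. \<exists>mu::3\<Rightarrow>real. (\<forall>k l. v k \<bullet> v l = (if k = l then 1 else 0)) \<and> (\<forall>k. A *v v k = mu k *\<^sub>R v k)"
proof -
  obtain v1 m1 where v1: "norm v1 = 1" "A *v v1 = m1 *\<^sub>R v1"
    using eig_step[OF sym, of "{}"] unit_perp[of "{}"] by auto
  obtain v2 m2 where v2: "norm v2 = 1" "v1 \<bullet> v2 = 0" "A *v v2 = m2 *\<^sub>R v2"
    using eig_step[OF sym, of "{v1}"] unit_perp[of "{v1}"] v1 by auto
  have c12: "card {v1, v2} \<le> 2" by (simp add: card_insert_le_m1)
  obtain v3 m3 where v3: "norm v3 = 1" "v1 \<bullet> v3 = 0" "v2 \<bullet> v3 = 0" "A *v v3 = m3 *\<^sub>R v3"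
    using eig_step[OF sym, of "{v1,v2}"] unit_perp[of "{v1,v2}"] v1 v2 c12 by auto
  define v :: "3\<Rightarrow>real^3" where "v k = (if k = 1 then v1 else if k = 2 then v2 else v3)" for k
  define mu :: "3\<Rightarrow>real" where "mu k = (if k = 1 then m1 else if k = 2 then m2 else m3)" for k
  have n: "v1 \<bullet> v1 = 1" "v2 \<bullet> v2 = 1" "v3 \<bullet> v3 = 1" using v1 v2 v3 by (simp_all add: norm_eq_1)
  have "\<forall>k l. v k \<bullet> v l = (if k = l then 1 else 0)"
    using n v2 v3 by (simp add: forall_3 v_def inner_commute)
  moreover have "\<forall>k. A *v v k = mu k *\<^sub>R v k"
    using v1 v2 v3 by (simp add: forall_3 v_def mu_def)
  ultimately show ?thesis by blast
qed

definition Dg :: "(3 \<Rightarrow> real) \<Rightarrow> mat3" where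
  "Dg d = (\<chi> i j. if i = j then d i else 0)"

lemma Dg_mult: "Dg a ** Dg b = Dg (\<lambda>k. a k * b k)"
  by (simp add: Dg_def matrix_matrix_mult_def vec_eq_iff sum_3 forall_3)

lemma Dg_transpose: "transpose (Dg a) = Dg a"
  by (simp add: Dg_def transpose_def vec_eq_iff forall_3)

lemma Dg_form: "y \<bullet> (Dg s *v y) = (\<Sum>k\<in>UNIV. s k * (y$k)^2)"
  by (simp add: Dg_def inner_vec_def matrix_vector_mult_def sum_3 power2_eq_square algebra_simps)

lemma sqrt_exists:
  assumes "C \<in> PSym3"
  shows "\<exists>U. U \<in> PSym3 \<and> U ** U = C"
proof -
  have sym: "transpose C = C" and pd: "PD C" using assms by (auto simp: PSym3_iff)
  obtain v :: "3\<Rightarrow>real^3" and mu where on: "\<And>k l. v k \<bullet> v l = (if k = l then 1 else 0)"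
      and ev: "\<And>k. C *v v k = mu k *\<^sub>R v k"
    using spectral3[OF sym] by blast
  have mupos: "mu k > 0" for k
  proof -
    have "v k \<noteq> 0" using on[of k k] by auto
    then have "v k \<bullet> (C *v v k) > 0" using pd unfolding PD_def by blast
    then show ?thesis using on[of k k] by (simp add: ev)
  qed
  define Q :: mat3 where "Q = (\<chi> i k. v k $ i)"
  have QtQ: "transpose Q ** Q = mat 1"
    using on by (simp add: Q_def matrix_matrix_mult_def transpose_def vec_eq_iff mat_def inner_vec_def)
  then have QQt: "Q ** transpose Q = mat 1" by (simp add: matrix_left_right_inverse)
  have evc: "(C *v v k) $ i = mu k * v k $ i" for k i using ev[of k] by simp
  have CQ: "C ** Q = Q ** Dg mu"
    using evc by (simp add: Q_def Dg_def matrix_matrix_mult_def matrix_vector_mult_def vec_eq_iff sum_3 forall_3 mult.commute)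
  have Cdec: "C = Q ** Dg mu ** transpose Q"
  proof -
    have "C = C ** (Q ** transpose Q)" using QQt by simp
    also have "\<dots> = (C ** Q) ** transpose Q" by (simp add: matrix_mul_assoc)
    also have "\<dots> = Q ** Dg mu ** transpose Q" by (simp only: CQ)
    finally show ?thesis .
  qed
  define s where "s k = sqrt (mu k)" for k
  have spos: "s k > 0" for k using mupos by (simp add: s_def)
  define U where "U = Q ** Dg s ** transpose Q"
  have "U ** U = Q ** Dg s ** (transpose Q ** Q) ** Dg s ** transpose Q"
    by (simp add: U_def matrix_mul_assoc)
  also have "\<dots> = Q ** Dg (\<lambda>k. s k * s k) ** transpose Q"
    by (simp add: QtQ Dg_mult[symmetric] matrix_mul_assoc)
  also have "(\<lambda>k. s k * s k) = mu" using mupos by (simp add: s_def fun_eq_iff less_imp_le)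
  finally have UU: "U ** U = C" using Cdec by simp
  have Ut: "transpose U = U"
    by (simp add: U_def matrix_transpose_mul Dg_transpose matrix_mul_assoc)
  have "PD U" unfolding PD_def
  proof (intro allI impI)
    fix x :: "real^3" assume x: "x \<noteq> 0"
    define y where "y = transpose Q *v x"
    have "Q *v y = x" using QQt by (metis matrix_vector_mul_assoc matrix_vector_mul_lid y_def)
    then have y: "y \<noteq> 0" using x by auto
    then obtain k where k: "y $ k \<noteq> 0" by (auto simp: vec_eq_iff)
    have "x \<bullet> (U *v x) = x \<bullet> (Q *v (Dg s *v y))"
      unfolding U_def y_def by (simp only: matrix_vector_mul_assoc matrix_mul_assoc)
    also have "\<dots> = y \<bullet> (Dg s *v y)" unfolding y_def by (rule inner_mv)
    also have "\<dots> = (\<Sum>k\<in>UNIV. s k * (y$k)^2)" by (rule Dg_form)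
    also have "\<dots> > 0"
    proof (rule sum_pos2[where i = k])
      show "0 < s k * (y $ k)^2" using k spos[of k] by simp
      show "\<And>i. i \<in> UNIV \<Longrightarrow> 0 \<le> s i * (y $ i)^2" using spos by (metis less_imp_le mult_nonneg_nonneg zero_le_power2)
    qed simp_all
    finally show "x \<bullet> (U *v x) > 0" .
  qed
  then show ?thesis using UU Ut by (auto simp: PSym3_iff)
qed


lemma trace_form: "trace (transpose D ** M ** D) = (\<Sum>k\<in>UNIV. column k D \<bullet> (M *v column k (D::mat3)))"
  by (simp add: trace_def matrix_matrix_mult_def transpose_def column_def inner_vec_def
      matrix_vector_mult_def sum_3 algebra_simps)

lemma transpose_diff: "transpose ((A::mat3) - B) = transpose A - transpose B"
  by (simp add: transpose_def vec_eq_iff)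
lemma transpose_add: "transpose ((A::mat3) + B) = transpose A + transpose B"
  by (simp add: transpose_def vec_eq_iff)
lemma transpose_uminus: "transpose (- (A::mat3)) = - transpose A"
  by (simp add: transpose_def vec_eq_iff)

lemma mm_ldiff: "(A::mat3) ** (B - C) = A ** B - A ** C"
  by (simp add: vec_eq_iff matrix_matrix_mult_def sum_3 algebra_simps)
lemma mm_rdiff: "((A::mat3) - B) ** C = A ** C - B ** C"
  by (simp add: vec_eq_iff matrix_matrix_mult_def sum_3 algebra_simps)
lemma mm_radd: "((A::mat3) + B) ** C = A ** C + B ** C"
  by (simp add: vec_eq_iff matrix_matrix_mult_def sum_3 algebra_simps)
lemma mm_lscale: "(c *\<^sub>R (A::mat3)) ** B = c *\<^sub>R (A ** B)"
  by (simp add: vec_eq_iff matrix_matrix_mult_def sum_3 algebra_simps)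
lemma mm_rscale: "(A::mat3) ** (c *\<^sub>R B) = c *\<^sub>R (A ** B)"
  by (simp add: vec_eq_iff matrix_matrix_mult_def sum_3 algebra_simps)
lemma mm_lneg: "(- (A::mat3)) ** B = - (A ** B)"
  by (simp add: vec_eq_iff matrix_matrix_mult_def sum_3 algebra_simps)
lemma mm_rneg: "(A::mat3) ** (- B) = - (A ** B)"
  by (simp add: vec_eq_iff matrix_matrix_mult_def sum_3 algebra_simps)
lemma trace_scale: "trace (c *\<^sub>R (A::mat3)) = c * trace A"
  by (simp add: trace_def sum_3 algebra_simps)

lemma trace_form_nonneg:
  fixes D :: mat3
  assumes "PD (M::mat3)"
  shows "trace (transpose D ** M ** D) \<ge> 0" and "trace (transpose D ** M ** D) = 0 \<Longrightarrow> D = 0"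
proof -
  have t: "column k D \<bullet> (M *v column k D) \<ge> 0" for k
    using assms unfolding PD_def by (cases "column k D = 0") (auto intro: less_imp_le)
  then show "trace (transpose D ** M ** D) \<ge> 0" unfolding trace_form by (simp add: sum_nonneg)
  assume "trace (transpose D ** M ** D) = 0"
  then have "\<forall>k\<in>UNIV. column k D \<bullet> (M *v column k D) = 0"
    unfolding trace_form by (subst sum_nonneg_eq_0_iff[symmetric]) (auto intro: t)
  then have "column k D = 0" for k using assms unfolding PD_def by (metis less_irrefl UNIV_I)
  then show "D = 0" by (simp add: vec_eq_iff column_def)
qed

lemma sqrt_unique:
  assumes U: "U \<in> PSym3" and V: "V \<in> PSym3" and UV: "U ** U = V ** V"
  shows "U = V"
proof -
  have Us: "transpose U = U" and Up: "PD U" and Vs: "transpose V = V" and Vp: "PD V"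
    using U V by (auto simp: PSym3_iff)
  define D where "D = U - V"
  have Ds: "transpose D = D" using Us Vs by (simp add: D_def transpose_diff)
  have "D ** U + V ** D = U ** U - V ** V"
    by (simp add: D_def mm_ldiff mm_rdiff)
  then have key: "D ** U + V ** D = 0" using UV by simp
  have "trace (D ** D ** U) + trace (D ** V ** D) = trace (D ** (D ** U + V ** D))"
    by (simp add: matrix_add_ldistrib trace_add matrix_mul_assoc)
  then have sum0: "trace (D ** D ** U) + trace (D ** V ** D) = 0" using key by (simp add: trace_0[unfolded mat_0] )
  have "trace (D ** D ** U) = trace (D ** U ** D)"
    by (metis matrix_mul_assoc trace_mul_sym)
  then have "trace (D ** D ** U) \<ge> 0" using trace_form_nonneg(1)[OF Up, of D] Ds by simp
  moreover have "trace (D ** V ** D) \<ge> 0" using trace_form_nonneg(1)[OF Vp, of D] Ds by simp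
  ultimately have "trace (D ** V ** D) = 0" using sum0 by linarith
  then have "D = 0" using trace_form_nonneg(2)[OF Vp, of D] Ds by simp
  then show ?thesis by (simp add: D_def)
qed

lemma msqrt_props:
  assumes "C \<in> PSym3"
  shows "msqrt C \<in> PSym3" "msqrt C ** msqrt C = C"
proof -
  have "\<exists>!U. U \<in> PSym3 \<and> U ** U = C"
    using sqrt_exists[OF assms] sqrt_unique by metis
  from theI'[OF this] show "msqrt C \<in> PSym3" "msqrt C ** msqrt C = C"
    unfolding msqrt_def by auto
qed


lemma mm_zero_r: "(A::mat3) ** 0 = 0" by (simp add: vec_eq_iff matrix_matrix_mult_def)
lemma mm_zero_l: "(0::mat3) ** A = 0" by (simp add: vec_eq_iff matrix_matrix_mult_def)

lemma det_PSym_pos: assumes "C \<in> PSym3" shows "det C > 0"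
proof -
  have U: "msqrt C \<in> PSym3" "msqrt C ** msqrt C = C" using msqrt_props[OF assms] by auto
  have "invertible (msqrt C)" using U(1) PD_invertible by (auto simp: PSym3_iff)
  then have "det (msqrt C) \<noteq> 0" by (simp add: invertible_det_nz)
  moreover have "det C = det (msqrt C) * det (msqrt C)" using U(2) det_mul by metis
  ultimately show ?thesis by (metis not_real_square_gt_zero)
qed

lemma inner_self_sym:
  assumes S: "transpose (M::mat3) = M"
  shows "M \<bullet> M = trace (M ** M)"
proof -
  have s: "M$j$i = M$i$j" for i j
  proof -
    have "transpose M $ i $ j = M $ i $ j" using S by simp
    then show ?thesis by (simp add: transpose_def)
  qed
  have "trace (M ** M) = (\<Sum>i\<in>UNIV. \<Sum>j\<in>UNIV. M$i$j * M$j$i)"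
    by (simp add: trace_def matrix_matrix_mult_def)
  also have "\<dots> = (\<Sum>i\<in>UNIV. \<Sum>j\<in>UNIV. M$i$j * M$i$j)" by (simp add: s)
  finally show ?thesis by (simp add: inner_mat3)
qed


lemma main_gen:
  fixes \<Psi> :: "real^3 \<Rightarrow> real" and r :: real and C Cp :: mat3
  assumes C1: "C1_on {x. \<forall>i. 0 < x$i} \<Psi>"
    and r: "r > 0"
    and CPS: "C \<in> PSym3"
    and CpPS: "Cp \<in> PSym3"
  shows "Helm r \<Psi> C Cp =
         (\<lambda>X. - (matrix_inv (msqrt Cp) ** X ** matrix_inv (msqrt Cp)))
           ` Ncone r (SigmaR \<Psi> C Cp)"
proof -
  have Cs: "transpose C = C" and Cpd: "PD C" using CPS by (auto simp: PSym3_iff)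
  have Cps: "transpose Cp = Cp" and Cppd: "PD Cp" using CpPS by (auto simp: PSym3_iff)
  define Up where "Up = msqrt Cp"
  define Ui where "Ui = matrix_inv Up"
  define Ci where "Ci = matrix_inv Cp"
  define Cinv where "Cinv = matrix_inv C"
  have UpPS: "Up \<in> PSym3" and UU: "Up ** Up = Cp" using msqrt_props[OF CpPS] by (auto simp: Up_def)
  have Ups: "transpose Up = Up" and Uppd: "PD Up" using UpPS by (auto simp: PSym3_iff)
  have Upinv: "invertible Up" using PD_invertible[OF Uppd] .
  have Cinvb: "invertible C" using PD_invertible[OF Cpd] .
  have Cpinv: "invertible Cp" using PD_invertible[OF Cppd] .
  have Uis: "transpose Ui = Ui" unfolding Ui_def using inv_sym[OF Upinv Ups] .
  have UiUp: "Ui ** Up = mat 1" and UpUi: "Up ** Ui = mat 1" using inv_LR[OF Upinv] by (auto simp: Ui_def)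
  have UpUi': "M ** Up ** Ui = M" for M by (metis matrix_mul_assoc UpUi matrix_mul_rid)
  have UiUp': "M ** Ui ** Up = M" for M by (metis matrix_mul_assoc UiUp matrix_mul_rid)
  have Ci_eq: "Ci = Ui ** Ui" unfolding Ci_def Ui_def UU[symmetric] using inv_mult[OF Upinv Upinv] .
  have Cis: "transpose Ci = Ci" unfolding Ci_def using inv_sym[OF Cpinv Cps] .
  have CpCi: "Cp ** Ci = mat 1" using inv_LR[OF Cpinv] by (simp add: Ci_def)
  have CiUp: "Ci ** Up = Ui" by (metis Ci_eq matrix_mul_assoc UiUp matrix_mul_rid)
  define X where "X = C ** Ci"
  have detC: "det C > 0" using det_PSym_pos[OF CPS] .
  have detCp: "det Cp > 0" using det_PSym_pos[OF CpPS] .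
  have "det Cp * det Ci = 1" using CpCi det_mul by (metis det_I)
  then have detCi: "det Ci > 0" using detCp by (metis zero_less_mult_pos zero_less_one)
  have detX: "det X > 0" unfolding X_def using detC detCi by (simp add: det_mul)
  have trX: "trace X > 0"
  proof -
    have "trace X = trace (Ui ** (C ** Ui))" unfolding X_def Ci_eq
      by (metis matrix_mul_assoc trace_mul_sym)
    also have "Ui ** (C ** Ui) = transpose Ui ** C ** Ui" by (simp add: Uis matrix_mul_assoc)
    finally show ?thesis using trace_PD[OF PD_congr[OF Cpd inv_invertible[OF Upinv]]] by (simp add: Ui_def)
  qed
  have XT: "transpose X = Ci ** C" unfolding X_def by (simp add: matrix_transpose_mul Cs Cis)
  have CCof: "C ** Cof X = det X *\<^sub>R Cp"
  proof -
    have "Ci ** C ** Cof X = det X *\<^sub>R mat 1" using cof_adj[of X] XT by simp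
    then have "Cp ** (Ci ** C ** Cof X) = Cp ** (det X *\<^sub>R mat 1)" by simp
    moreover have "Cp ** (Ci ** C ** Cof X) = C ** Cof X" by (metis matrix_mul_assoc CpCi matrix_mul_lid)
    ultimately show ?thesis by (simp add: mm_rscale)
  qed
  have CinvC: "Cinv ** C = mat 1" using inv_LR[OF Cinvb] by (simp add: Cinv_def)
  have CofX: "Cof X = det X *\<^sub>R (Cinv ** Cp)"
  proof -
    have "Cof X = Cinv ** (C ** Cof X)" by (metis matrix_mul_assoc CinvC matrix_mul_lid)
    then show ?thesis by (simp add: CCof mm_rscale)
  qed
  have trCof: "trace (Cof X) > 0"
  proof -
    have "trace (Cinv ** Cp) = trace (Up ** Cinv ** Up)" unfolding UU[symmetric]
      by (metis matrix_mul_assoc trace_mul_sym)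
    also have "Up ** Cinv ** Up = transpose Up ** Cinv ** Up" by (simp add: Ups)
    finally have "trace (Cinv ** Cp) > 0"
      using trace_PD[OF PD_congr[OF PD_inv[OF Cpd Cs] Upinv]] by (simp add: Cinv_def)
    then show ?thesis using detX by (simp add: CofX trace_scale)
  qed
  obtain a b c where G: "Dgrad (Wtilde \<Psi>) X = a *\<^sub>R mat 1 + b *\<^sub>R (trace X *\<^sub>R mat 1 - transpose X) + c *\<^sub>R Cof X"
    using Dgrad_eq[OF C1 trX trCof detX] by blast
  define G where "G = Dgrad (Wtilde \<Psi>) X"
  have CG: "C ** G = a *\<^sub>R C + b *\<^sub>R (trace X *\<^sub>R C - C ** Ci ** C) + (c * det X) *\<^sub>R Cp"
    unfolding G_def G XT
    by (simp add: matrix_add_ldistrib mm_ldiff mm_rscale CCof matrix_mul_assoc)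
  have CGs: "transpose (C ** G) = C ** G"
    unfolding CG by (simp add: transpose_add transpose_diff transpose_scalar matrix_transpose_mul Cs Cis Cps matrix_mul_assoc)
  have msymCG: "msym (C ** G) = C ** G"
    unfolding msym_def CGs by (simp add: scaleR_2[symmetric] scaleR_scaleR)
  define ST where "ST = SigmaT \<Psi> C Cp"
  define SR where "SR = SigmaR \<Psi> C Cp"
  have ST_eq: "ST = 2 *\<^sub>R (C ** G ** Ci)" unfolding ST_def SigmaT_def G_def X_def Ci_def ..
  have SR_eq: "SR = 2 *\<^sub>R (Ui ** (C ** G) ** Ui)"
    unfolding SR_def SigmaR_def Ui_def Up_def G_def X_def Ci_def msymCG[unfolded G_def X_def Ci_def] ..
  have SR_sim: "SR = Ui ** ST ** Up"
    unfolding SR_eq ST_eq by (simp add: mm_lscale mm_rscale) (metis CiUp matrix_mul_assoc)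
  have SRs: "transpose SR = SR"
  proof -
    have "transpose (Ui ** (C ** G) ** Ui) = Ui ** (C ** G) ** Ui"
      by (metis matrix_transpose_mul matrix_mul_assoc Uis CGs)
    then show ?thesis unfolding SR_eq by (simp add: transpose_scalar)
  qed
  define DT where "DT = dev3 ST"
  define DR where "DR = dev3 SR"
  have trSR: "trace SR = trace ST"
    unfolding SR_sim by (metis matrix_mul_assoc trace_mul_sym UpUi matrix_mul_rid)
  have DR_sim: "DR = Ui ** DT ** Up"
    unfolding DR_def DT_def dev3_def trSR
    by (simp add: mm_ldiff mm_rdiff mm_lscale mm_rscale SR_sim UiUp)
  have DRs: "transpose DR = DR"
    unfolding DR_def dev3_def by (simp add: transpose_diff transpose_scalar SRs)
  have normDR: "norm DR = phiH \<Psi> C Cp"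
  proof -
    have "norm DR = sqrt (trace (DR ** DR))" by (simp add: norm_eq_sqrt_inner inner_self_sym[OF DRs])
    also have "trace (DR ** DR) = trace (Ui ** (DT ** DT ** Up))"
      unfolding DR_sim by (simp add: matrix_mul_assoc UpUi')
    also have "\<dots> = trace (DT ** DT)"
      by (metis matrix_mul_assoc trace_mul_sym UpUi matrix_mul_rid)
    finally show ?thesis unfolding phiH_def DT_def ST_def .
  qed
  have key: "Ui ** (l *\<^sub>R (DR /\<^sub>R \<phi>)) ** Ui = l *\<^sub>R (Ci ** DT /\<^sub>R \<phi>)" for l \<phi>
  proof -
    have "Ui ** DR ** Ui = Ci ** DT"
      unfolding DR_sim Ci_eq by (simp add: matrix_mul_assoc UpUi')
    then show ?thesis by (simp add: mm_lscale mm_rscale)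
  qed
  show ?thesis
    unfolding Helm_def Ncone_def Let_def SR_def[symmetric] Up_def[symmetric] Ui_def[symmetric]
      Ci_def[symmetric] ST_def[symmetric] DR_def[symmetric] DT_def[symmetric] normDR
  proof -
    let ?f = "\<lambda>X. - (Ui ** X ** Ui)"
    let ?p = "phiH \<Psi> C Cp"
    have eq: "{- (l *\<^sub>R (Ci ** DT /\<^sub>R ?p)) |l. 0 \<le> l} = ?f ` {l *\<^sub>R (DR /\<^sub>R ?p) |l. 0 \<le> l}"
    proof
      show "{- (l *\<^sub>R (Ci ** DT /\<^sub>R ?p)) |l. 0 \<le> l} \<subseteq> ?f ` {l *\<^sub>R (DR /\<^sub>R ?p) |l. 0 \<le> l}"
      proof
        fix Y assume "Y \<in> {- (l *\<^sub>R (Ci ** DT /\<^sub>R ?p)) |l. 0 \<le> l}"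
        then obtain l where l: "0 \<le> l" "Y = - (l *\<^sub>R (Ci ** DT /\<^sub>R ?p))" by blast
        then have "Y = ?f (l *\<^sub>R (DR /\<^sub>R ?p))" using key[of l ?p] by simp
        moreover have "l *\<^sub>R (DR /\<^sub>R ?p) \<in> {l *\<^sub>R (DR /\<^sub>R ?p) |l. 0 \<le> l}" using l by blast
        ultimately show "Y \<in> ?f ` {l *\<^sub>R (DR /\<^sub>R ?p) |l. 0 \<le> l}" by blast
      qed
      show "?f ` {l *\<^sub>R (DR /\<^sub>R ?p) |l. 0 \<le> l} \<subseteq> {- (l *\<^sub>R (Ci ** DT /\<^sub>R ?p)) |l. 0 \<le> l}"
      proof
        fix Y assume "Y \<in> ?f ` {l *\<^sub>R (DR /\<^sub>R ?p) |l. 0 \<le> l}"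
        then obtain l where l: "0 \<le> l" "Y = ?f (l *\<^sub>R (DR /\<^sub>R ?p))" by blast
        then have "Y = - (l *\<^sub>R (Ci ** DT /\<^sub>R ?p))" using key[of l ?p] by simp
        then show "Y \<in> {- (l *\<^sub>R (Ci ** DT /\<^sub>R ?p)) |l. 0 \<le> l}" using l by blast
      qed
    qed
    show "(if ?p < r then {0} else if ?p = r then {- (l *\<^sub>R (Ci ** DT /\<^sub>R ?p)) |l. 0 \<le> l} else {}) =
      ?f ` (if ?p < r then {0} else if ?p = r then {l *\<^sub>R (DR /\<^sub>R ?p) |l. 0 \<le> l} else {})"
    proof (cases "?p < r")
      case True then show ?thesis by (simp add: mm_zero_l mm_zero_r)
    next
      case False
      show ?thesis
      proof (cases "?p = r")
        case True
        show ?thesis unfolding if_not_P[OF False] if_P[OF True] by (rule eq)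
      qed (use False in simp)
    qed
  qed
qed


lemma CF_PSym: assumes "F \<in> GLplus3" shows "transpose F ** F \<in> PSym3"
proof -
  have inv: "invertible F" using assms by (simp add: GLplus3_def invertible_det_nz)
  have "PD (mat 1 :: mat3)" by (simp add: PD_def)
  from PD_congr[OF this inv] have "PD (transpose F ** F)" by simp
  moreover have "transpose (transpose F ** F) = transpose F ** F" by (simp add: matrix_transpose_mul)
  ultimately show ?thesis by (simp add: PSym3_iff)
qed

theorem mainTheorem10:
  fixes \<Psi> :: "real^3 \<Rightarrow> real" and r :: real and F Cp :: mat3
  assumes "C1_on {x. \<forall>i. 0 < x$i} \<Psi>"
    and "r > 0"
    and "F \<in> GLplus3"
    and "Cp \<in> PSym3"
  shows "Helm r \<Psi> (transpose F ** F) Cp =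
         (\<lambda>X. - (matrix_inv (msqrt Cp) ** X ** matrix_inv (msqrt Cp)))
           ` Ncone r (SigmaR \<Psi> (transpose F ** F) Cp)"
  using main_gen[OF assms(1,2) CF_PSym[OF assms(3)] assms(4)] .

end
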